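(* Let $x\in\mathbb{R}^d$, $d\ge1$, and run the following procedure. Compute $(\theta,p)=\mathrm{csa}_{\text{even}}(x)$. If $\theta^\top\Pi_{[0,1]^d}(x)\le p$, stop. Otherwise set $R:=\{1,\dots,d\}$, $q:=p$ and repeat the following loop: if $|R|=1$, stop; compute $v_R := x_R - \frac{\theta_R^\top x_R - q}{|R|}\theta_R$; let $S := \{j\in R : (v_j>1 \text{ and } \theta_j=1) \text{ or } (v_j<0\text{ and }\theta_j=-1)\}$; if $S=\emptyset$, stop; otherwise replace $q$ by $q - |\{j\in S:\theta_j=1\}|$ and $R$ by $R\setminus S$, and repeat. Then at the beginning of every execution of the loop, $\theta_R^\top \Pi_{[0,1]^{R}}(x_R) > q$ holds (i.e. the check $\theta^\top\Pi_{[0,1]}(\cdot)\le p$ is never satisfied in the recursive part and is only needed at the start).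
   Context: For $R\subseteq\{1,\dots,d\}$ and $u\in\mathbb{R}^d$, $u_R$ denotes the subvector $(u_j)_{j\in R}$; $\Pi_{[0,1]^R}$ is componentwise clipping to $[0,1]$. $\mathrm{csa}_{\text{even}}(x)$: set $\theta_j=1$ if $x_j>1/2$ and $\theta_j=-1$ otherwise; if $|\{j:\theta_j=1\}|$ is even, choose $j^*\in\arg\min_j|x_j-1/2|$ and replace $\theta_{j^*}$ by $-\theta_{j^*}$; set $p=|\{j:\theta_j=1\}|-1$; output $(\theta,p)$. *)

theory Defs
  imports Complex_Main
begin

text \<open>Coordinates are indexed by 1..d; vectors are functions nat => real.\<close>

definition clip01 :: "real \<Rightarrow> real" where
  "clip01 t = max 0 (min 1 t)"

definition theta0 :: "(nat \<Rightarrow> real) \<Rightarrow> nat \<Rightarrow> real" where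
  "theta0 x j = (if x j > 1/2 then 1 else -1)"

text \<open>csa_even, parametrised by the chosen minimiser jstar of |x_j - 1/2|.\<close>
definition csa_theta :: "(nat \<Rightarrow> real) \<Rightarrow> nat \<Rightarrow> nat \<Rightarrow> nat \<Rightarrow> real" where
  "csa_theta x d jstar =
     (if even (card {j\<in>{1..d}. theta0 x j = 1})
      then (theta0 x)(jstar := - theta0 x jstar) else theta0 x)"

definition csa_p :: "(nat \<Rightarrow> real) \<Rightarrow> nat \<Rightarrow> nat \<Rightarrow> real" where
  "csa_p x d jstar = real (card {j\<in>{1..d}. csa_theta x d jstar j = 1}) - 1"

definition loop_v :: "(nat \<Rightarrow> real) \<Rightarrow> (nat \<Rightarrow> real) \<Rightarrow> nat set \<times> real \<Rightarrow> nat \<Rightarrow> real" where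
  "loop_v x \<theta> Rq j =
     x j - ((\<Sum>i\<in>fst Rq. \<theta> i * x i) - snd Rq) / real (card (fst Rq)) * \<theta> j"

definition loop_S :: "(nat \<Rightarrow> real) \<Rightarrow> (nat \<Rightarrow> real) \<Rightarrow> nat set \<times> real \<Rightarrow> nat set" where
  "loop_S x \<theta> Rq = {j\<in>fst Rq. (loop_v x \<theta> Rq j > 1 \<and> \<theta> j = 1) \<or> (loop_v x \<theta> Rq j < 0 \<and> \<theta> j = -1)}"

definition loop_step :: "(nat \<Rightarrow> real) \<Rightarrow> (nat \<Rightarrow> real) \<Rightarrow> nat set \<times> real \<Rightarrow> nat set \<times> real" where
  "loop_step x \<theta> Rq =
     (fst Rq - loop_S x \<theta> Rq, snd Rq - real (card {j\<in>loop_S x \<theta> Rq. \<theta> j = 1}))"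

end

theory Submission
  imports Defs
begin

lemma step_inv:
  fixes \<theta> x :: "nat \<Rightarrow> real" and R :: "nat set" and q :: real
  assumes fin: "finite R" and gt: "(\<Sum>j\<in>R. \<theta> j * clip01 (x j)) > q"
  shows "finite (fst (loop_step x \<theta> (R,q))) \<and>
         (\<Sum>j\<in>fst (loop_step x \<theta> (R,q)). \<theta> j * clip01 (x j)) > snd (loop_step x \<theta> (R,q))"
proof -
  define S where "S = loop_S x \<theta> (R,q)"
  have SR: "S \<subseteq> R" by (auto simp: S_def loop_S_def)
  have finS: "finite S" using SR fin finite_subset by blast
  have "(\<Sum>j\<in>S. \<theta> j * clip01 (x j)) \<le> (\<Sum>j\<in>S. if \<theta> j = 1 then 1 else 0)"
    by (rule sum_mono) (auto simp: S_def loop_S_def clip01_def)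
  also have "\<dots> = real (card {j\<in>S. \<theta> j = 1})"
    using finS by (simp add: sum.inter_filter[symmetric])
  finally have le: "(\<Sum>j\<in>S. \<theta> j * clip01 (x j)) \<le> real (card {j\<in>S. \<theta> j = 1})" .
  have split: "(\<Sum>j\<in>R. \<theta> j * clip01 (x j)) = (\<Sum>j\<in>R - S. \<theta> j * clip01 (x j)) + (\<Sum>j\<in>S. \<theta> j * clip01 (x j))"
    using sum.subset_diff[OF SR fin] by simp
  show ?thesis using fin gt le split
    by (simp add: loop_step_def S_def[symmetric])
qed

theorem theorem7:
  fixes x :: "nat \<Rightarrow> real" and d jstar k :: nat
  assumes "d \<ge> 1"
    and "jstar \<in> {1..d}"
    and "\<forall>j\<in>{1..d}. \<bar>x jstar - 1/2\<bar> \<le> \<bar>x j - 1/2\<bar>"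
    and "\<not> ((\<Sum>j\<in>{1..d}. csa_theta x d jstar j * clip01 (x j)) \<le> csa_p x d jstar)"
    and "\<forall>i<k. card (fst ((loop_step x (csa_theta x d jstar) ^^ i) ({1..d}, csa_p x d jstar))) \<noteq> 1
             \<and> loop_S x (csa_theta x d jstar)
                 ((loop_step x (csa_theta x d jstar) ^^ i) ({1..d}, csa_p x d jstar)) \<noteq> {}"
  shows "(\<Sum>j\<in>fst ((loop_step x (csa_theta x d jstar) ^^ k) ({1..d}, csa_p x d jstar)).
            csa_theta x d jstar j * clip01 (x j))
         > snd ((loop_step x (csa_theta x d jstar) ^^ k) ({1..d}, csa_p x d jstar))"
proof -
  define \<theta> where "\<theta> = csa_theta x d jstar"
  define P where "P = (\<lambda>Rq. finite (fst Rq) \<and> (\<Sum>j\<in>fst Rq. \<theta> j * clip01 (x j)) > snd Rq)"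
  have "P ((loop_step x \<theta> ^^ n) ({1..d}, csa_p x d jstar))" for n
  proof (induction n)
    case 0
    then show ?case using assms(4) by (simp add: P_def \<theta>_def)
  next
    case (Suc n)
    obtain R q where eq: "(loop_step x \<theta> ^^ n) ({1..d}, csa_p x d jstar) = (R, q)"
      by (cases "(loop_step x \<theta> ^^ n) ({1..d}, csa_p x d jstar)") auto
    have "finite R \<and> (\<Sum>j\<in>R. \<theta> j * clip01 (x j)) > q" using Suc.IH unfolding P_def eq by simp
    then show ?case using step_inv[of R q \<theta> x] unfolding P_def funpow.simps comp_apply eq by simp
  qed
  then show ?thesis by (simp add: P_def \<theta>_def)
qed

end
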